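(* Let $c \in \mathbb{Z}$ and $f_c(x) = x^2+c$. If $-c$ is not a square in $\mathbb{Z}$, then $f_c(f_c(x)) = x^4 + 2cx^2 + c^2 + c$ is irreducible over $\mathbb{Q}$. If $-c$ is a square in $\mathbb{Z}$ and $c \neq 0, -1$, then writing $c = -b^2$ with $b \in \mathbb{Z}$ we have $f_c(f_c(x)) = (x^2 - (b^2 - b))(x^2 - (b^2+b))$, where each of the two quadratic factors is irreducible over $\mathbb{Q}$. *)

theory Defs
  imports "HOL-Computational_Algebra.Polynomial_Factorial"
begin

definition fpoly :: "int \<Rightarrow> rat poly" where
  "fpoly c = [:rat_of_int c, 0, 1:]"

end

theory Submission
  imports Defs
begin

lemma sq: fixes k c :: int assumes "c^2+c = k^2" shows "c = 0 \<or> c = -1"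
proof (rule ccontr)
  assume n: "\<not> (c = 0 \<or> c = -1)"
  define m where "m = \<bar>k\<bar>"
  have m0: "m \<ge> 0" and mk: "m^2 = c^2 + c" using assms by (auto simp: m_def)
  show False
  proof (cases "c \<ge> 1")
    case True
    have "c^2 < m^2" using True mk by simp
    hence "c < m" using m0 power2_less_imp_less by blast
    moreover have "m^2 < (c+1)^2" using True mk by (simp add: power2_eq_square algebra_simps)
    hence "m < c+1" using True power2_less_imp_less by force
    ultimately show False by simp
  next
    case False
    hence c: "c \<le> -2" using n by simp
    have "(-c-1)^2 < m^2" using c mk by (simp add: power2_eq_square algebra_simps)
    hence "-c-1 < m" using m0 power2_less_imp_less by blast
    moreover have "m^2 < (-c)^2" using c mk by (simp add: power2_eq_square algebra_simps)
    hence "m < -c" by (rule power2_less_imp_less) (use c in auto)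
    ultimately show False by simp
  qed
qed
lemma deg1: assumes "degree (a::rat poly) = 1" shows "\<exists>x. poly a x = 0"
proof -
  have "coeff a (degree a) \<noteq> 0" using assms by (metis degree_0 leading_coeff_0_iff zero_neq_one)
  hence "coeff a 1 \<noteq> 0" using assms by simp
  moreover have "a = [:coeff a 0, coeff a 1:]"
  proof (rule poly_eqI)
    fix n show "coeff a n = coeff [:coeff a 0, coeff a 1:] n"
      using assms by (cases n; cases "n - 1") (auto simp: coeff_eq_0)
  qed
  ultimately have "poly a (- coeff a 0 / coeff a 1) = 0"
    by (metis (no_types, lifting) add.right_inverse add.right_neutral mult_minus_left mult_zero_right nonzero_divide_eq_eq poly_0 poly_pCons mult.commute)
  thus ?thesis by blast
qed
lemma ratsq: fixes q :: rat and n :: int assumes "q^2 = of_int n" shows "\<exists>k::int. n = k^2"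
proof -
  obtain a b where ab: "quotient_of q = (a,b)" by (cases "quotient_of q")
  have q: "q = of_int a / of_int b" and b: "b > 0" and cp: "coprime a b"
    using ab quotient_of_div quotient_of_denom_pos quotient_of_coprime by auto
  have "(of_int a)^2 = (of_int (n * b^2) :: rat)" using assms b q by (simp add: field_simps power2_eq_square)
  hence e: "a^2 = n*b^2" using of_int_eq_iff by fastforce
  hence "b^2 dvd a^2" by simp
  moreover have "coprime (b^2) (a^2)" using cp by (simp add: coprime_commute)
  ultimately have "is_unit (b^2)" using coprime_absorb_left by blast
  hence "b = 1" using b by (auto simp: power2_eq_1_iff)
  thus ?thesis using e by auto
qed
lemma deg2_irr: fixes p :: "rat poly" assumes d: "degree p = 2" and nr: "\<And>x. poly p x \<noteq> 0"
  shows "irreducible p"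
proof (rule irreducibleI)
  show p0: "p \<noteq> 0" using d by auto
  show "\<not> p dvd 1" using d by (simp add: is_unit_iff_degree[OF p0])
  fix a b assume ab: "p = a * b"
  hence a0: "a \<noteq> 0" and b0: "b \<noteq> 0" using p0 by auto
  have ds: "degree a + degree b = 2" using ab a0 b0 d degree_mult_eq by metis
  show "a dvd 1 \<or> b dvd 1"
  proof (cases "degree a = 0 \<or> degree b = 0")
    case True thus ?thesis using a0 b0 is_unit_iff_degree by auto
  next
    case False
    hence "degree a = 1" using ds by auto
    then obtain x where "poly a x = 0" using deg1 by blast
    hence "poly p x = 0" using ab by simp
    thus ?thesis using nr by blast
  qed
qed

lemma monic_coeffs: "[:p0,u,1:]*[:q0,v,1:] = [:a0,a1,a2,a3,(1::rat):] \<Longrightarrow> p0*q0 = a0 \<and> p0*v+u*q0 = a1 \<and> p0+u*v+q0=a2 \<and> u+v=a3"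
  by (simp add: algebra_simps)

lemma quartic_irr:
  fixes c :: int assumes nsq: "\<not> (\<exists>b::int. -c = b^2)"
  shows "irreducible [:rat_of_int (c^2 + c), 0, rat_of_int (2*c), 0, 1:]" (is "irreducible ?P")
proof -
  have nr: "poly ?P x \<noteq> 0" for x
  proof
    assume "poly ?P x = 0"
    hence "(x^2 + of_int c)^2 = of_int (-c)" by (simp add: power2_eq_square algebra_simps)
    thus False using ratsq nsq by blast
  qed
  have c01: "c \<noteq> 0 \<and> c \<noteq> -1" using nsq by (metis neg_equal_0_iff_equal power2_eq_square mult_1 mult_zero_left minus_minus)
  show ?thesis
  proof (rule irreducibleI)
    show p0: "?P \<noteq> 0" by simp
    have dP: "degree ?P = 4" by simp
    show "\<not> ?P dvd 1" using dP by (simp only: is_unit_iff_degree[OF p0])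
    fix a b assume ab: "?P = a * b"
    hence a0: "a \<noteq> 0" and b0: "b \<noteq> 0" using p0 by auto
    have ds: "degree a + degree b = 4" using ab a0 b0 dP degree_mult_eq by metis
    show "a dvd 1 \<or> b dvd 1"
    proof (rule ccontr)
      assume nu: "\<not> (a dvd 1 \<or> b dvd 1)"
      hence da: "degree a \<noteq> 0" and db: "degree b \<noteq> 0" using a0 b0 is_unit_iff_degree by auto
      have "degree a \<noteq> 1"
      proof
        assume "degree a = 1"
        then obtain x where "poly a x = 0" using deg1 by blast
        hence "poly ?P x = 0" using ab by simp
        thus False using nr by blast
      qed
      moreover have "degree b \<noteq> 1"
      proof
        assume "degree b = 1"
        then obtain x where "poly b x = 0" using deg1 by blast
        hence "poly ?P x = 0" using ab by simp
        thus False using nr by blast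
      qed
      ultimately have d2: "degree a = 2" "degree b = 2" using ds da db by auto
      obtain a0 a1 a2 where A: "a = [:a0,a1,a2:]" "a2 \<noteq> 0" using degree2_coeffs[OF d2(1)] by metis
      obtain b0 b1 b2 where B: "b = [:b0,b1,b2:]" "b2 \<noteq> 0" using degree2_coeffs[OF d2(2)] by metis
      have ab2: "a2 * b2 = 1" using ab A B by (simp add: mult.commute)
      have aa: "a = smult a2 [:a0/a2, a1/a2, 1:]" using A by simp
      have bb: "b = smult b2 [:b0/b2, b1/b2, 1:]" using B by simp
      have "?P = smult (a2*b2) ([:a0/a2, a1/a2, 1:] * [:b0/b2, b1/b2, 1:])"
        unfolding ab by (subst aa, subst bb) (simp only: mult_smult_left mult_smult_right smult_smult mult.commute)
      hence "?P = [:a0/a2, a1/a2, 1:] * [:b0/b2, b1/b2, 1:]" using ab2 by (simp only: smult_1_left)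
      from monic_coeffs[OF this[symmetric]] obtain p0 u q0 v :: rat where
        e1: "p0*q0 = of_int (c^2+c)" and e2: "p0*v+u*q0 = 0" and e3: "p0+u*v+q0 = of_int (2*c)" and e4: "u+v = 0"
        by blast
      have "u * (q0 - p0) = 0" using e2 e4 by (simp add: algebra_simps add_eq_0_iff)
      hence "u = 0 \<or> q0 = p0" by simp
      thus False
      proof
        assume u: "u = 0"
        have "((p0-q0)/2)^2 = ((p0+q0)^2 - 4*(p0*q0))/4" by (simp add: power2_eq_square field_simps)
        also have "\<dots> = of_int (-c)" using e1 e3 u by (simp add: power2_eq_square algebra_simps)
        finally show False using ratsq nsq by blast
      next
        assume "q0 = p0"
        hence "p0^2 = of_int (c^2+c)" using e1 by (simp add: power2_eq_square)
        then obtain k where "c^2+c = k^2" using ratsq by blast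
        thus False using sq c01 by blast
      qed
    qed
  qed
qed

lemma comp: "pcompose (fpoly c) (fpoly c) = [:rat_of_int (c^2 + c), 0, rat_of_int (2*c), 0, 1:]"
  by (simp add: fpoly_def pcompose_pCons power2_eq_square algebra_simps)

lemma quad_irr: fixes r :: int assumes "\<not> (\<exists>k. r = k^2)"
  shows "irreducible [:- rat_of_int r, 0, 1:]"
proof (rule deg2_irr)
  show "degree [:- rat_of_int r, 0, 1:] = 2" by simp
  fix x show "poly [:- rat_of_int r, 0, 1:] x \<noteq> 0"
  proof
    assume "poly [:- rat_of_int r, 0, 1:] x = 0"
    hence "x^2 = of_int r" by (simp add: power2_eq_square)
    thus False using ratsq assms by blast
  qed
qed

theorem proposition2p1:
  fixes c :: int
  shows "pcompose (fpoly c) (fpoly c)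
           = [:rat_of_int (c^2 + c), 0, rat_of_int (2*c), 0, 1:]
       \<and> ((\<not> (\<exists>b::int. -c = b^2)) \<longrightarrow> irreducible (pcompose (fpoly c) (fpoly c)))
       \<and> (\<forall>b::int. c = -(b^2) \<and> c \<noteq> 0 \<and> c \<noteq> -1 \<longrightarrow>
            pcompose (fpoly c) (fpoly c)
              = [:- rat_of_int (b^2 - b), 0, 1:] * [:- rat_of_int (b^2 + b), 0, 1:]
            \<and> irreducible [:- rat_of_int (b^2 - b), 0, 1:]
            \<and> irreducible [:- rat_of_int (b^2 + b), 0, 1:])"
proof (intro conjI impI allI)
  show "pcompose (fpoly c) (fpoly c) = [:rat_of_int (c^2 + c), 0, rat_of_int (2*c), 0, 1:]" by (rule comp)
  show "\<not> (\<exists>b::int. -c = b^2) \<Longrightarrow> irreducible (pcompose (fpoly c) (fpoly c))"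
    unfolding comp by (rule quartic_irr)
  fix b :: int assume h: "c = -(b^2) \<and> c \<noteq> 0 \<and> c \<noteq> -1"
  hence b0: "b \<noteq> 0" and b1: "b \<noteq> 1" and bm1: "b \<noteq> -1" by auto
  show "pcompose (fpoly c) (fpoly c) = [:- rat_of_int (b^2 - b), 0, 1:] * [:- rat_of_int (b^2 + b), 0, 1:]"
    unfolding comp using h by (simp add: power2_eq_square algebra_simps)
  show "irreducible [:- rat_of_int (b^2 - b), 0, 1:]"
  proof (rule quad_irr)
    show "\<not> (\<exists>k. b^2 - b = k^2)"
    proof
      assume "\<exists>k. b^2 - b = k^2"
      then obtain k where "(-b)^2 + (-b) = k^2" by auto
      thus False using sq b0 b1 by fastforce
    qed
  qed
  show "irreducible [:- rat_of_int (b^2 + b), 0, 1:]"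
  proof (rule quad_irr)
    show "\<not> (\<exists>k. b^2 + b = k^2)"
      using sq b0 bm1 by blast
  qed
qed

end
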